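(* Fix a policy (choosing $A_t$ as a function of the observations available before round $t$) and two parameter vectors $\theta,\theta'\in(0,1)^K$ sharing the same delay CDF $\tau$. Let $\ell_T$ be the log-likelihood ratio $\log\big(p_\theta(\mathcal O_T)/p_{\theta'}(\mathcal O_T)\big)$ of all observations $\mathcal O_T$ collected up to round $T$. In the censored model with threshold $m$, \[ \mathbb{E}_\theta[\ell_T]=\mathbb{E}_\theta\Big[\sum_{s=1}^{T-m}d(\theta_{A_s}\tau_m,\theta'_{A_s}\tau_m)+\sum_{s=T-m+1}^{T}d(\theta_{A_s}\tau_{T-s},\theta'_{A_s}\tau_{T-s})\Big], \] and in the uncensored model, \[ \mathbb{E}_\theta[\ell_T]=\mathbb{E}_\theta\Big[\sum_{s=1}^{T}d(\theta_{A_s}\tau_{T-s},\theta'_{A_s}\tau_{T-s})\Big]. \]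
   Context: Delayed-feedback bandit model: $K$ arms with conversion rates $\theta_1,\dots,\theta_K$; a delay distribution on $\mathbb{N}$ with CDF $\tau_d=\mathbb{P}(D\le d)$. At each round $t$ the learner picks $A_t$ based on past observations; this triggers, conditionally independently given the past, $C_t\sim\mathrm{Bernoulli}(\theta_{A_t})$ and $D_t\sim\tau$. Let $X_{s,t}=C_s\mathbf{1}\{D_s\le t-s\}$ for $s\le t$. Uncensored model: at round $t$ the learner observes all $X_{s,t}$, $1\le s\le t$; so the observations up to round $T$ are $(X_{s,t})_{1\le s\le t\le T}$. Censored model with threshold $m\ge1$: at round $t$ the learner observes $X_{s,t}$ only for $t-m\le s\le t$; so the observations up to $T$ are $(X_{s,t})_{1\le t\le T,\,t-m\le s\le t}$. $\mathbb{E}_\theta$ denotes expectation when the conversion rates are $\theta$. $d(p,q)=p\log(p/q)+(1-p)\log((1-p)/(1-q))$ with the convention $d(0,0)=0$. *)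

theory Defs
  imports "HOL-Probability.Probability"
begin

text \<open>Bernoulli KL divergence d(p,q); note that in HOL 0 * ln(0/0) = 0, so d(0,0) = 0.\<close>
definition bkl :: "real \<Rightarrow> real \<Rightarrow> real" where
  "bkl p q = p * ln (p / q) + (1 - p) * ln ((1 - p) / (1 - q))"

definition delay_cdf :: "nat pmf \<Rightarrow> nat \<Rightarrow> real" where
  "delay_cdf tau d = measure_pmf.prob tau {..d}"

text \<open>History of the first t rounds: list position s-1 holds (A_s, C_s, D_s).\<close>
type_synonym 'a hist = "('a \<times> bool \<times> nat) list"

definition arm :: "'a hist \<Rightarrow> nat \<Rightarrow> 'a" where
  "arm h s = fst (h ! (s - 1))"

definition Xobs :: "'a hist \<Rightarrow> nat \<Rightarrow> nat \<Rightarrow> bool" where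
  "Xobs h s t = (fst (snd (h ! (s - 1))) \<and> snd (snd (h ! (s - 1))) \<le> t - s)"

text \<open>Visibility of X_{s,u} at round u: censored with threshold m (u - m <= s), or uncensored.\<close>
definition censored :: "nat \<Rightarrow> nat \<Rightarrow> nat \<Rightarrow> bool" where
  "censored m s u = (int u - int m \<le> int s)"

definition uncensored :: "nat \<Rightarrow> nat \<Rightarrow> bool" where
  "uncensored s u = True"

definition observations :: "(nat \<Rightarrow> nat \<Rightarrow> bool) \<Rightarrow> 'a hist \<Rightarrow> nat \<Rightarrow> (nat \<Rightarrow> nat \<Rightarrow> bool option)" where
  "observations vis h t =
     (\<lambda>s u. if 1 \<le> s \<and> s \<le> u \<and> u \<le> t \<and> vis s u then Some (Xobs h s u) else None)"

fun traj :: "(nat \<Rightarrow> nat \<Rightarrow> bool) \<Rightarrow> (nat \<Rightarrow> (nat \<Rightarrow> nat \<Rightarrow> bool option) \<Rightarrow> 'a)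
              \<Rightarrow> nat pmf \<Rightarrow> ('a \<Rightarrow> real) \<Rightarrow> nat \<Rightarrow> 'a hist pmf" where
  "traj vis pol tau theta 0 = return_pmf []"
| "traj vis pol tau theta (Suc t) =
     bind_pmf (traj vis pol tau theta t) (\<lambda>h.
       let a = pol (Suc t) (observations vis h t) in
       bind_pmf (bernoulli_pmf (theta a)) (\<lambda>c.
         map_pmf (\<lambda>d. h @ [(a, c, d)]) tau))"

definition obs_law :: "(nat \<Rightarrow> nat \<Rightarrow> bool) \<Rightarrow> (nat \<Rightarrow> (nat \<Rightarrow> nat \<Rightarrow> bool option) \<Rightarrow> 'a)
              \<Rightarrow> nat pmf \<Rightarrow> ('a \<Rightarrow> real) \<Rightarrow> nat \<Rightarrow> (nat \<Rightarrow> nat \<Rightarrow> bool option) pmf" where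
  "obs_law vis pol tau theta T = map_pmf (\<lambda>h. observations vis h T) (traj vis pol tau theta T)"

definition llr :: "(nat \<Rightarrow> nat \<Rightarrow> bool) \<Rightarrow> (nat \<Rightarrow> (nat \<Rightarrow> nat \<Rightarrow> bool option) \<Rightarrow> 'a)
              \<Rightarrow> nat pmf \<Rightarrow> ('a \<Rightarrow> real) \<Rightarrow> ('a \<Rightarrow> real) \<Rightarrow> nat \<Rightarrow> 'a hist \<Rightarrow> real" where
  "llr vis pol tau theta theta' T h =
     ln (pmf (obs_law vis pol tau theta T) (observations vis h T)
         / pmf (obs_law vis pol tau theta' T) (observations vis h T))"

end

theory Submission
  imports Defs
begin

lemma exp_bind_fin:
  fixes h :: "'b \<Rightarrow> real"
  assumes "finite (set_pmf p)" "\<And>x. x \<in> set_pmf p \<Longrightarrow> finite (set_pmf (f x))"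
  shows "measure_pmf.expectation (bind_pmf p f) h = measure_pmf.expectation p (\<lambda>x. measure_pmf.expectation (f x) h)"
proof -
  have "measure_pmf.expectation (bind_pmf p f) h = (\<Sum>a\<in>set_pmf p. pmf p a *\<^sub>R measure_pmf.expectation (f a) h)"
    using assms by (intro pmf_expectation_bind) auto
  also have "\<dots> = measure_pmf.expectation p (\<lambda>x. measure_pmf.expectation (f x) h)"
    using assms by (subst integral_measure_pmf[of "set_pmf p"]) auto
  finally show ?thesis .
qed

fun seqp :: "('b list \<Rightarrow> 'b pmf) \<Rightarrow> nat \<Rightarrow> 'b list pmf" where
  "seqp K 0 = return_pmf []"
| "seqp K (Suc k) = bind_pmf (seqp K k) (\<lambda>xs. map_pmf (\<lambda>x. xs @ [x]) (K xs))"

definition KLd :: "'b pmf \<Rightarrow> 'b pmf \<Rightarrow> real" where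
  "KLd P Q = measure_pmf.expectation P (\<lambda>x. ln (pmf P x / pmf Q x))"

lemma seqp_len: "xs \<in> set_pmf (seqp K k) \<Longrightarrow> length xs = k"
  by (induction k arbitrary: xs) auto

lemma seqp_fin: "(\<And>xs. finite (set_pmf (K xs))) \<Longrightarrow> finite (set_pmf (seqp K k))"
  by (induction k) auto

lemma seqp_sub: "(\<And>xs. set_pmf (P xs) \<subseteq> set_pmf (Q xs)) \<Longrightarrow> set_pmf (seqp P k) \<subseteq> set_pmf (seqp Q k)"
  by (induction k) (auto, blast)

lemma pmf_seqp_Suc:
  assumes "length xs = k"
  shows "pmf (seqp K (Suc k)) (xs @ [x]) = pmf (seqp K k) xs * pmf (K xs) x"
proof -
  have "pmf (seqp K (Suc k)) (xs @ [x]) = measure_pmf.expectation (seqp K k) (\<lambda>ys. pmf (map_pmf (\<lambda>x. ys @ [x]) (K ys)) (xs @ [x]))"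
    by (simp add: pmf_bind)
  also have "\<dots> = measure_pmf.expectation (seqp K k) (\<lambda>ys. indicator {xs} ys * pmf (K xs) x)"
  proof (rule integral_cong_AE)
    show "AE ys in measure_pmf (seqp K k). pmf (map_pmf (\<lambda>x. ys @ [x]) (K ys)) (xs @ [x]) = indicator {xs} ys * pmf (K xs) x"
    proof (rule AE_pmfI)
      fix ys assume ys: "ys \<in> set_pmf (seqp K k)"
      show "pmf (map_pmf (\<lambda>x. ys @ [x]) (K ys)) (xs @ [x]) = indicator {xs} ys * pmf (K xs) x"
      proof (cases "ys = xs")
        case True
        have "inj (\<lambda>x. xs @ [x])" by (auto simp: inj_def)
        then show ?thesis using True pmf_map_inj'[of "\<lambda>x. xs @ [x]" "K xs" x] by simp
      next
        case False
        have "xs @ [x] \<notin> set_pmf (map_pmf (\<lambda>x. ys @ [x]) (K ys))" using False by auto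
        then show ?thesis using False by (simp add: pmf_eq_0_set_pmf del: set_map_pmf)
      qed
    qed
  qed auto
  also have "\<dots> = pmf (seqp K k) xs * pmf (K xs) x"
    by (simp add: measure_pmf_single)
  finally show ?thesis .
qed

lemma chain_rule:
  assumes fin: "\<And>xs. finite (set_pmf (P xs))"
    and sub: "\<And>xs. set_pmf (P xs) \<subseteq> set_pmf (Q xs)"
  shows "measure_pmf.expectation (seqp P k) (\<lambda>xs. ln (pmf (seqp P k) xs / pmf (seqp Q k) xs))
       = measure_pmf.expectation (seqp P k) (\<lambda>xs. \<Sum>i<k. KLd (P (take i xs)) (Q (take i xs)))"
proof (induction k)
  case 0
  then show ?case by simp
next
  case (Suc k)
  let ?R = "\<lambda>xs. ln (pmf (seqp P k) xs / pmf (seqp Q k) xs)"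
  let ?S = "\<lambda>xs. \<Sum>i<k. KLd (P (take i xs)) (Q (take i xs))"
  have finS: "finite (set_pmf (seqp P k))" by (rule seqp_fin[OF fin])
  have "measure_pmf.expectation (seqp P (Suc k)) (\<lambda>xs. ln (pmf (seqp P (Suc k)) xs / pmf (seqp Q (Suc k)) xs))
     = measure_pmf.expectation (seqp P k) (\<lambda>xs. measure_pmf.expectation (P xs)
          (\<lambda>x. ln (pmf (seqp P (Suc k)) (xs @ [x]) / pmf (seqp Q (Suc k)) (xs @ [x]))))"
    using finS fin by (simp add: exp_bind_fin)
  also have "\<dots> = measure_pmf.expectation (seqp P k) (\<lambda>xs. ?R xs + KLd (P xs) (Q xs))"
  proof (rule integral_cong_AE[OF _ _ AE_pmfI])
    fix xs assume xs: "xs \<in> set_pmf (seqp P k)"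
    have len: "length xs = k" using seqp_len[OF xs] .
    have a: "pmf (seqp P k) xs > 0" using xs by (simp add: pmf_positive)
    have a': "pmf (seqp Q k) xs > 0" using seqp_sub[of P Q k, OF sub] xs by (auto simp: pmf_positive)
    have "measure_pmf.expectation (P xs)
          (\<lambda>x. ln (pmf (seqp P (Suc k)) (xs @ [x]) / pmf (seqp Q (Suc k)) (xs @ [x])))
        = measure_pmf.expectation (P xs) (\<lambda>x. ?R xs + ln (pmf (P xs) x / pmf (Q xs) x))"
    proof (rule integral_cong_AE[OF _ _ AE_pmfI])
      fix x assume x: "x \<in> set_pmf (P xs)"
      have b: "pmf (P xs) x > 0" using x by (simp add: pmf_positive)
      have b': "pmf (Q xs) x > 0" using x sub[of xs] by (auto simp: pmf_positive)
      show "ln (pmf (seqp P (Suc k)) (xs @ [x]) / pmf (seqp Q (Suc k)) (xs @ [x])) = ?R xs + ln (pmf (P xs) x / pmf (Q xs) x)"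
        unfolding pmf_seqp_Suc[OF len, of P] pmf_seqp_Suc[OF len, of Q]
        using a a' b b' by (simp add: ln_div ln_mult del: seqp.simps)
    qed auto
    also have "\<dots> = ?R xs + KLd (P xs) (Q xs)"
      unfolding KLd_def using fin[of xs]
      by (subst Bochner_Integration.integral_add) (auto intro: integrable_measure_pmf_finite)
    finally show "measure_pmf.expectation (P xs)
          (\<lambda>x. ln (pmf (seqp P (Suc k)) (xs @ [x]) / pmf (seqp Q (Suc k)) (xs @ [x])))
         = ?R xs + KLd (P xs) (Q xs)" .
  qed auto
  also have "\<dots> = measure_pmf.expectation (seqp P k) ?R + measure_pmf.expectation (seqp P k) (\<lambda>xs. KLd (P xs) (Q xs))"
    using finS by (subst Bochner_Integration.integral_add) (auto intro: integrable_measure_pmf_finite)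
  also have "\<dots> = measure_pmf.expectation (seqp P k) ?S + measure_pmf.expectation (seqp P k) (\<lambda>xs. KLd (P xs) (Q xs))"
    using Suc by simp
  also have "\<dots> = measure_pmf.expectation (seqp P k) (\<lambda>xs. ?S xs + KLd (P xs) (Q xs))"
    using finS by (subst Bochner_Integration.integral_add) (auto intro: integrable_measure_pmf_finite)
  also have "\<dots> = measure_pmf.expectation (seqp P k) (\<lambda>xs. measure_pmf.expectation (P xs)
          (\<lambda>x. \<Sum>i<Suc k. KLd (P (take i (xs @ [x]))) (Q (take i (xs @ [x])))))"
  proof (rule integral_cong_AE[OF _ _ AE_pmfI])
    fix xs assume xs: "xs \<in> set_pmf (seqp P k)"
    have len: "length xs = k" using seqp_len[OF xs] .
    have "(\<Sum>i<Suc k. KLd (P (take i (xs @ [x]))) (Q (take i (xs @ [x])))) = ?S xs + KLd (P xs) (Q xs)" for x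
      using len by (simp add: lessThan_Suc)
    then show "?S xs + KLd (P xs) (Q xs) = measure_pmf.expectation (P xs)
          (\<lambda>x. \<Sum>i<Suc k. KLd (P (take i (xs @ [x]))) (Q (take i (xs @ [x]))))"
      by simp
  qed auto
  also have "\<dots> = measure_pmf.expectation (seqp P (Suc k)) (\<lambda>xs. \<Sum>i<Suc k. KLd (P (take i xs)) (Q (take i xs)))"
    using finS fin by (simp add: exp_bind_fin)
  finally show ?case .
qed


definition rowk :: "real \<Rightarrow> nat pmf \<Rightarrow> nat \<Rightarrow> nat option pmf" where
  "rowk p tau L = bind_pmf (bernoulli_pmf p) (\<lambda>c. map_pmf (\<lambda>d. if c \<and> d \<le> L then Some d else None) tau)"

lemma cdf_sum: "delay_cdf tau L = (\<Sum>j\<le>L. pmf tau j)"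
  unfolding delay_cdf_def by (simp add: measure_measure_pmf_finite)

lemma cdf_le1: "delay_cdf tau L \<le> 1" and cdf_ge0: "0 \<le> delay_cdf tau L"
  unfolding delay_cdf_def by auto

lemma pmf_rowk_None:
  assumes "0 \<le> p" "p \<le> 1"
  shows "pmf (rowk p tau L) None = 1 - p * delay_cdf tau L"
proof -
  have "(\<lambda>d. if d \<le> L then Some d else None) -` {None} = UNIV - {..L}" by auto
  then have X: "pmf (map_pmf (\<lambda>d. if d \<le> L then Some d else None) tau) None = 1 - delay_cdf tau L"
    unfolding pmf_map delay_cdf_def using measure_pmf.prob_compl[of "{..L}" tau] by simp
  show ?thesis using assms unfolding rowk_def pmf_bind by (simp add: X ring_distribs)
qed

lemma pmf_rowk_Some:
  assumes "0 \<le> p" "p \<le> 1"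
  shows "pmf (rowk p tau L) (Some j) = (if j \<le> L then p * pmf tau j else 0)"
proof -
  have "(\<lambda>d. if d \<le> L then Some d else None) -` {Some j} = (if j \<le> L then {j} else {})" by (auto split: if_splits)
  then have X: "pmf (map_pmf (\<lambda>d. if d \<le> L then Some d else None) tau) (Some j) = (if j \<le> L then pmf tau j else 0)"
    unfolding pmf_map by (simp add: measure_pmf_single)
  show ?thesis using assms unfolding rowk_def pmf_bind by (simp add: X)
qed

lemma set_rowk: "set_pmf (rowk p tau L) \<subseteq> insert None (Some ` {..L})"
  unfolding rowk_def by (auto split: if_splits)

lemma fin_rowk: "finite (set_pmf (rowk p tau L))"
  using set_rowk by (rule finite_subset) auto

lemma sub_rowk:
  assumes "0 < p" "p < 1" "0 < q" "q < 1"
  shows "set_pmf (rowk p tau L) \<subseteq> set_pmf (rowk q tau L)"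
proof
  fix x assume x: "x \<in> set_pmf (rowk p tau L)"
  show "x \<in> set_pmf (rowk q tau L)"
  proof (cases x)
    case None
    have "q * delay_cdf tau L < 1"
    proof -
      have "q * delay_cdf tau L \<le> q * 1"
        using cdf_le1[of tau L] assms by (intro mult_left_mono) auto
      then show ?thesis using assms by linarith
    qed
    then show ?thesis using None assms by (simp add: set_pmf_iff pmf_rowk_None)
  next
    case (Some j)
    then have "pmf (rowk p tau L) (Some j) \<noteq> 0" using x by (simp add: set_pmf_iff)
    then have "j \<le> L" "pmf tau j \<noteq> 0" using assms by (auto simp: pmf_rowk_Some split: if_splits)
    then show ?thesis using Some assms by (simp add: set_pmf_iff pmf_rowk_Some)
  qed
qed

lemma KL_rowk:
  assumes "0 < p" "p < 1" "0 < q" "q < 1"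
  shows "KLd (rowk p tau L) (rowk q tau L) = bkl (p * delay_cdf tau L) (q * delay_cdf tau L)"
proof -
  let ?A = "insert None (Some ` {..L})"
  let ?f = "\<lambda>x. ln (pmf (rowk p tau L) x / pmf (rowk q tau L) x)"
  define t where "t = delay_cdf tau L"
  have "KLd (rowk p tau L) (rowk q tau L) = (\<Sum>a\<in>?A. ?f a * pmf (rowk p tau L) a)"
    unfolding KLd_def using set_rowk by (intro integral_measure_pmf_real) auto
  also have "\<dots> = ?f None * pmf (rowk p tau L) None + (\<Sum>j\<le>L. ?f (Some j) * pmf (rowk p tau L) (Some j))"
  proof -
    have "(\<Sum>a\<in>?A. ?f a * pmf (rowk p tau L) a) = ?f None * pmf (rowk p tau L) None + (\<Sum>a\<in>Some ` {..L}. ?f a * pmf (rowk p tau L) a)"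
      by (rule sum.insert) auto
    also have "(\<Sum>a\<in>Some ` {..L}. ?f a * pmf (rowk p tau L) a) = (\<Sum>j\<le>L. ?f (Some j) * pmf (rowk p tau L) (Some j))"
      by (rule sum.reindex_cong[where l=Some]) auto
    finally show ?thesis .
  qed
  also have "(\<Sum>j\<le>L. ?f (Some j) * pmf (rowk p tau L) (Some j)) = (\<Sum>j\<le>L. ln (p / q) * p * pmf tau j)"
    using assms by (intro sum.cong) (auto simp: pmf_rowk_Some)
  also have "\<dots> = ln (p / q) * p * t"
    by (simp add: t_def cdf_sum sum_distrib_left)
  finally have eq: "KLd (rowk p tau L) (rowk q tau L) = ln ((1 - p * t) / (1 - q * t)) * (1 - p * t) + ln (p / q) * p * t"
    using assms by (simp add: pmf_rowk_None t_def)
  show ?thesis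
  proof (cases "t = 0")
    case True
    then show ?thesis unfolding eq by (simp add: bkl_def t_def[symmetric])
  next
    case False
    then have "t > 0" using cdf_ge0[of tau L] t_def by auto
    then have "ln (p * t / (q * t)) = ln (p / q)" by simp
    then have "bkl (p * t) (q * t) = ln (p / q) * p * t + ln ((1 - p * t) / (1 - q * t)) * (1 - p * t)"
      unfolding bkl_def by (simp only: mult.commute mult.left_commute)
    then show ?thesis unfolding eq t_def by (simp only: add.commute)
  qed
qed


definition ev :: "(nat \<Rightarrow> nat) \<Rightarrow> nat \<Rightarrow> ('a \<times> bool \<times> nat) \<Rightarrow> nat option" where
  "ev L s x = (if fst (snd x) \<and> snd (snd x) \<le> L s then Some (snd (snd x)) else None)"

definition Ek :: "(nat \<Rightarrow> nat) \<Rightarrow> nat \<Rightarrow> 'a hist \<Rightarrow> nat option list" where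
  "Ek L k h = map (\<lambda>i. ev L (Suc i) (h ! i)) [0..<k]"

definition Gk :: "(nat \<Rightarrow> nat \<Rightarrow> bool) \<Rightarrow> nat \<Rightarrow> nat option list \<Rightarrow> (nat \<Rightarrow> nat \<Rightarrow> bool option)" where
  "Gk vis t es = (\<lambda>s u. if 1 \<le> s \<and> s \<le> u \<and> u \<le> t \<and> vis s u
      then Some (case es ! (s - 1) of None \<Rightarrow> False | Some d \<Rightarrow> d \<le> u - s) else None)"

definition Kn where
  "Kn vis pol tau theta L es = rowk (theta (pol (Suc (length es)) (Gk vis (length es) es))) tau (L (Suc (length es)))"

definition VL :: "(nat \<Rightarrow> nat \<Rightarrow> bool) \<Rightarrow> (nat \<Rightarrow> nat) \<Rightarrow> nat \<Rightarrow> bool" where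
  "VL vis L T = (\<forall>s u. 1 \<le> s \<longrightarrow> s \<le> T \<longrightarrow> ((s \<le> u \<and> u \<le> T \<and> vis s u) \<longleftrightarrow> (s \<le> u \<and> u - s \<le> L s)))"

lemma VLD: "VL vis L T \<Longrightarrow> 1 \<le> s \<Longrightarrow> s \<le> T \<Longrightarrow> ((s \<le> u \<and> u \<le> T \<and> vis s u) \<longleftrightarrow> (s \<le> u \<and> u - s \<le> L s))"
  unfolding VL_def by blast

lemma len_Ek[simp]: "length (Ek L k h) = k" by (simp add: Ek_def)

lemma nth_Ek: "i < k \<Longrightarrow> Ek L k h ! i = ev L (Suc i) (h ! i)" by (simp add: Ek_def)

lemma obs_Gk:
  assumes "VL vis L T" "t \<le> T"
  shows "observations vis h t = Gk vis t (Ek L t h)"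
proof (intro ext)
  fix s u
  show "observations vis h t s u = Gk vis t (Ek L t h) s u"
  proof (cases "1 \<le> s \<and> s \<le> u \<and> u \<le> t \<and> vis s u")
    case True
    then have sT: "s \<le> T" "u \<le> T" using assms(2) by auto
    then have le: "u - s \<le> L s" using VLD[OF assms(1), of s u] True by auto
    have "Ek L t h ! (s - 1) = ev L s (h ! (s - 1))" using True by (subst nth_Ek) auto
    then show ?thesis using True le unfolding observations_def Gk_def Xobs_def ev_def
      by (auto split: option.splits)
  next
    case False
    then show ?thesis unfolding observations_def Gk_def by auto
  qed
qed

lemma traj_len: "h \<in> set_pmf (traj vis pol tau theta k) \<Longrightarrow> length h = k"
  by (induction k arbitrary: h) (auto simp: Let_def)

lemma obs_append: "t \<le> length h0 \<Longrightarrow> observations vis (h0 @ xs) t = observations vis h0 t"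
  unfolding observations_def Xobs_def by (intro ext) (auto simp: nth_append)

lemma traj_arm:
  "h \<in> set_pmf (traj vis pol tau theta k) \<Longrightarrow> 1 \<le> s \<Longrightarrow> s \<le> k \<Longrightarrow> arm h s = pol s (observations vis h (s - 1))"
proof (induction k arbitrary: h)
  case 0
  then show ?case by simp
next
  case (Suc k)
  then obtain h0 c d where h0: "h0 \<in> set_pmf (traj vis pol tau theta k)"
    and h: "h = h0 @ [(pol (Suc k) (observations vis h0 k), c, d)]"
    by (auto simp: Let_def)
  have len: "length h0 = k" using traj_len[OF h0] .
  show ?case
  proof (cases "s = Suc k")
    case True
    then show ?thesis using h len obs_append[of k h0 vis] by (simp add: arm_def nth_append)
  next
    case False
    then have "s \<le> k" using Suc by auto
    then have "arm h0 s = pol s (observations vis h0 (s - 1))" using Suc h0 by auto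
    moreover have "s - 1 < k" using \<open>s \<le> k\<close> Suc.prems by linarith
    then have "arm h s = arm h0 s" using h len by (simp add: arm_def nth_append)
    moreover have "observations vis h (s - 1) = observations vis h0 (s - 1)"
      using h len \<open>s \<le> k\<close> obs_append[of "s - 1" h0 vis] by simp
    ultimately show ?thesis by simp
  qed
qed

lemma Ek_Suc: "length h = k \<Longrightarrow> Ek L (Suc k) (h @ [x]) = Ek L k h @ [ev L (Suc k) x]"
  unfolding Ek_def by (auto simp: nth_append)

lemma map_traj:
  assumes "VL vis L T" "k \<le> T"
  shows "map_pmf (Ek L k) (traj vis pol tau theta k) = seqp (Kn vis pol tau theta L) k"
  using assms(2)
proof (induction k)
  case 0
  then show ?case by (simp add: Ek_def)
next
  case (Suc k)
  have "map_pmf (Ek L (Suc k)) (traj vis pol tau theta (Suc k))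
      = bind_pmf (traj vis pol tau theta k) (\<lambda>h. map_pmf (\<lambda>x. Ek L k h @ [x]) (Kn vis pol tau theta L (Ek L k h)))"
    unfolding traj.simps map_bind_pmf
  proof (rule bind_pmf_cong[OF refl])
    fix h assume h: "h \<in> set_pmf (traj vis pol tau theta k)"
    have len: "length h = k" using traj_len[OF h] .
    have ob: "Gk vis k (Ek L k h) = observations vis h k" using obs_Gk[OF assms(1), of k h] Suc.prems by simp
    show "map_pmf (Ek L (Suc k)) (let a = pol (Suc k) (observations vis h k)
            in bernoulli_pmf (theta a) \<bind> (\<lambda>c. map_pmf (\<lambda>d. h @ [(a, c, d)]) tau))
        = map_pmf (\<lambda>x. Ek L k h @ [x]) (Kn vis pol tau theta L (Ek L k h))"
      unfolding Kn_def rowk_def Let_def len_Ek ob map_bind_pmf map_pmf_comp Ek_Suc[OF len]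
      by (intro bind_pmf_cong map_pmf_cong refl) (simp add: ev_def)
  qed
  also have "\<dots> = bind_pmf (map_pmf (Ek L k) (traj vis pol tau theta k)) (\<lambda>xs. map_pmf (\<lambda>x. xs @ [x]) (Kn vis pol tau theta L xs))"
    by (simp add: bind_map_pmf)
  also have "\<dots> = seqp (Kn vis pol tau theta L) (Suc k)"
    using Suc by simp
  finally show ?case .
qed

definition Vset :: "(nat \<Rightarrow> nat) \<Rightarrow> nat \<Rightarrow> nat option list set" where
  "Vset L T = {es. length es = T \<and> (\<forall>i<T. \<forall>d. es ! i = Some d \<longrightarrow> d \<le> L (Suc i))}"

lemma Ek_V: "Ek L T h \<in> Vset L T"
  unfolding Vset_def by (auto simp: nth_Ek ev_def split: if_splits)

lemma Gk_aux:
  assumes "VL vis L T" "es \<in> Vset L T" "es' \<in> Vset L T" "Gk vis T es = Gk vis T es'" "i < T" "es ! i = Some d"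
  shows "\<exists>d'. es' ! i = Some d' \<and> d' \<le> d"
proof -
  have dle: "d \<le> L (Suc i)" using assms(2,5,6) unfolding Vset_def by auto
  have vis: "Suc i + d \<le> T \<and> vis (Suc i) (Suc i + d)"
    using assms(1,5) dle unfolding VL_def by (metis add_diff_cancel_left' le_add1 Suc_leI not_less_eq_eq le_SucI le_add2 plus_1_eq_Suc)
  have "Gk vis T es (Suc i) (Suc i + d) = Some True" using vis assms(6) by (simp add: Gk_def)
  then have "Gk vis T es' (Suc i) (Suc i + d) = Some True" using assms(4) by simp
  then show ?thesis using vis by (auto simp: Gk_def split: option.splits)
qed

lemma Gk_inj:
  assumes "VL vis L T"
  shows "inj_on (Gk vis T) (Vset L T)"
proof (rule inj_onI)
  fix es es' assume es: "es \<in> Vset L T" and es': "es' \<in> Vset L T" and eq: "Gk vis T es = Gk vis T es'"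
  have len: "length es = T" "length es' = T" using es es' by (auto simp: Vset_def)
  show "es = es'"
  proof (rule nth_equalityI)
    show "length es = length es'" using len by simp
    fix i assume i: "i < length es"
    then have iT: "i < T" using len by simp
    show "es ! i = es' ! i"
    proof (cases "es ! i")
      case None
      show ?thesis
      proof (cases "es' ! i")
        case (Some d')
        from Gk_aux[OF assms es' es eq[symmetric] iT Some] None show ?thesis by simp
      qed (simp add: None)
    next
      case (Some d)
      from Gk_aux[OF assms es es' eq iT Some] obtain d' where d': "es' ! i = Some d'" "d' \<le> d" by auto
      from Gk_aux[OF assms es' es eq[symmetric] iT d'(1)] Some have "d \<le> d'" by auto
      then show ?thesis using Some d' by simp
    qed
  qed
qed

lemma pmf_map_inj_V:
  assumes "inj_on f V" "set_pmf M \<subseteq> V" "x \<in> V"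
  shows "pmf (map_pmf f M) (f x) = pmf M x"
proof -
  have "pmf (map_pmf f M) (f x) = measure M (f -` {f x})" by (simp add: pmf_map)
  also have "\<dots> = measure M (f -` {f x} \<inter> set_pmf M)" by (simp add: measure_Int_set_pmf)
  also have "f -` {f x} \<inter> set_pmf M = {x} \<inter> set_pmf M"
    using assms by (auto dest: inj_onD)
  also have "measure M ({x} \<inter> set_pmf M) = pmf M x" by (simp add: measure_Int_set_pmf measure_pmf_single)
  finally show ?thesis .
qed

lemma pmf_obs:
  assumes "VL vis L T"
  shows "pmf (obs_law vis pol tau theta T) (observations vis h T) = pmf (seqp (Kn vis pol tau theta L) T) (Ek L T h)"
proof -
  have "obs_law vis pol tau theta T = map_pmf (Gk vis T) (map_pmf (Ek L T) (traj vis pol tau theta T))"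
    unfolding obs_law_def map_pmf_comp by (intro map_pmf_cong refl) (rule obs_Gk[OF assms order.refl])
  also have "\<dots> = map_pmf (Gk vis T) (seqp (Kn vis pol tau theta L) T)"
    by (subst map_traj[OF assms order.refl]) (rule refl)
  finally have eq: "obs_law vis pol tau theta T = map_pmf (Gk vis T) (seqp (Kn vis pol tau theta L) T)" .
  have sub: "set_pmf (seqp (Kn vis pol tau theta L) T) \<subseteq> Vset L T"
    using map_traj[OF assms order.refl, of pol tau theta, symmetric] Ek_V by auto
  show ?thesis unfolding eq obs_Gk[OF assms order.refl, of h]
    by (rule pmf_map_inj_V[OF Gk_inj[OF assms] sub Ek_V])
qed


lemma take_Ek: "i \<le> k \<Longrightarrow> take i (Ek L k h) = Ek L i h"
  unfolding Ek_def by (simp add: take_map)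

theorem main_gen:
  assumes V: "VL vis L T"
    and th: "\<forall>a. 0 < theta a \<and> theta a < 1"
    and th': "\<forall>a. 0 < theta' a \<and> theta' a < 1"
  shows "measure_pmf.expectation (traj vis pol tau theta T) (llr vis pol tau theta theta' T)
       = measure_pmf.expectation (traj vis pol tau theta T)
          (\<lambda>h. \<Sum>s = 1..T. bkl (theta (arm h s) * delay_cdf tau (L s)) (theta' (arm h s) * delay_cdf tau (L s)))"
proof -
  let ?P = "Kn vis pol tau theta L" and ?Q = "Kn vis pol tau theta' L"
  have fin: "\<And>xs. finite (set_pmf (?P xs))" by (simp add: Kn_def fin_rowk)
  have sub: "\<And>xs. set_pmf (?P xs) \<subseteq> set_pmf (?Q xs)" unfolding Kn_def using th th' by (intro sub_rowk) auto
  have "measure_pmf.expectation (traj vis pol tau theta T) (llr vis pol tau theta theta' T)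
      = measure_pmf.expectation (traj vis pol tau theta T)
         (\<lambda>h. ln (pmf (seqp ?P T) (Ek L T h) / pmf (seqp ?Q T) (Ek L T h)))"
    unfolding llr_def pmf_obs[OF V] by (rule refl)
  also have "\<dots> = measure_pmf.expectation (map_pmf (Ek L T) (traj vis pol tau theta T))
         (\<lambda>es. ln (pmf (seqp ?P T) es / pmf (seqp ?Q T) es))"
    by simp
  also have "\<dots> = measure_pmf.expectation (seqp ?P T) (\<lambda>es. ln (pmf (seqp ?P T) es / pmf (seqp ?Q T) es))"
    by (subst map_traj[OF V order.refl]) (rule refl)
  also have "\<dots> = measure_pmf.expectation (seqp ?P T) (\<lambda>es. \<Sum>i<T. KLd (?P (take i es)) (?Q (take i es)))"
    by (rule chain_rule[OF fin sub])
  also have "\<dots> = measure_pmf.expectation (map_pmf (Ek L T) (traj vis pol tau theta T)) (\<lambda>es. \<Sum>i<T. KLd (?P (take i es)) (?Q (take i es)))"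
    by (subst map_traj[OF V order.refl]) (rule refl)
  also have "\<dots> = measure_pmf.expectation (traj vis pol tau theta T)
          (\<lambda>h. \<Sum>s = 1..T. bkl (theta (arm h s) * delay_cdf tau (L s)) (theta' (arm h s) * delay_cdf tau (L s)))"
    unfolding integral_map_pmf
  proof (rule integral_cong_AE[OF _ _ AE_pmfI])
    fix h assume h: "h \<in> set_pmf (traj vis pol tau theta T)"
    have "(\<Sum>i<T. KLd (?P (take i (Ek L T h))) (?Q (take i (Ek L T h))))
        = (\<Sum>i<T. bkl (theta (arm h (Suc i)) * delay_cdf tau (L (Suc i))) (theta' (arm h (Suc i)) * delay_cdf tau (L (Suc i))))"
    proof (rule sum.cong[OF refl])
      fix i assume i: "i \<in> {..<T}"
      then have iT: "i \<le> T" by simp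
      have arm: "arm h (Suc i) = pol (Suc i) (Gk vis i (Ek L i h))"
        using traj_arm[OF h, of "Suc i"] i obs_Gk[OF V iT, of h] by simp
      show "KLd (?P (take i (Ek L T h))) (?Q (take i (Ek L T h)))
          = bkl (theta (arm h (Suc i)) * delay_cdf tau (L (Suc i))) (theta' (arm h (Suc i)) * delay_cdf tau (L (Suc i)))"
        unfolding take_Ek[OF iT] Kn_def len_Ek arm[symmetric]
        using th th' by (intro KL_rowk) auto
    qed
    also have "\<dots> = (\<Sum>s = 1..T. bkl (theta (arm h s) * delay_cdf tau (L s)) (theta' (arm h s) * delay_cdf tau (L s)))"
      using sum.atLeast1_atMost_eq[of "\<lambda>s. bkl (theta (arm h s) * delay_cdf tau (L s)) (theta' (arm h s) * delay_cdf tau (L s))" T]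
      by simp
    finally show "(\<Sum>i<T. KLd (?P (take i (Ek L T h))) (?Q (take i (Ek L T h))))
        = (\<Sum>s = 1..T. bkl (theta (arm h s) * delay_cdf tau (L s)) (theta' (arm h s) * delay_cdf tau (L s)))" .
  qed auto
  finally show ?thesis .
qed

lemma VL_cens: "VL (censored m) (\<lambda>s. min m (T - s)) T"
  unfolding VL_def censored_def by auto

lemma VL_unc: "VL uncensored (\<lambda>s. T - s) T"
  unfolding VL_def uncensored_def by auto

theorem lemma2:
  fixes pol :: "nat \<Rightarrow> (nat \<Rightarrow> nat \<Rightarrow> bool option) \<Rightarrow> 'a::finite"
    and tau :: "nat pmf" and theta theta' :: "'a \<Rightarrow> real" and m T :: nat
  assumes "\<forall>a. 0 < theta a \<and> theta a < 1"
    and "\<forall>a. 0 < theta' a \<and> theta' a < 1"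
    and "m \<ge> 1"
  shows "measure_pmf.expectation (traj (censored m) pol tau theta T)
            (llr (censored m) pol tau theta theta' T)
         = measure_pmf.expectation (traj (censored m) pol tau theta T)
            (\<lambda>h. (\<Sum>s = 1..T - m. bkl (theta (arm h s) * delay_cdf tau m)
                                        (theta' (arm h s) * delay_cdf tau m))
               + (\<Sum>s = T - m + 1..T. bkl (theta (arm h s) * delay_cdf tau (T - s))
                                          (theta' (arm h s) * delay_cdf tau (T - s))))
       \<and> measure_pmf.expectation (traj uncensored pol tau theta T)
            (llr uncensored pol tau theta theta' T)
         = measure_pmf.expectation (traj uncensored pol tau theta T)
            (\<lambda>h. \<Sum>s = 1..T. bkl (theta (arm h s) * delay_cdf tau (T - s))
                                  (theta' (arm h s) * delay_cdf tau (T - s)))"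
proof
  show "measure_pmf.expectation (traj uncensored pol tau theta T)
            (llr uncensored pol tau theta theta' T)
         = measure_pmf.expectation (traj uncensored pol tau theta T)
            (\<lambda>h. \<Sum>s = 1..T. bkl (theta (arm h s) * delay_cdf tau (T - s))
                                  (theta' (arm h s) * delay_cdf tau (T - s)))"
    by (rule main_gen[OF VL_unc assms(1,2)])
  have split: "(\<Sum>s = 1..T. f s) = (\<Sum>s = 1..T - m. f s) + (\<Sum>s = T - m + 1..T. f s)" for f :: "nat \<Rightarrow> real"
  proof -
    have "{1..T} = {1..T - m} \<union> {T - m + 1..T}" by auto
    moreover have "{1..T - m} \<inter> {T - m + 1..T} = {}" by auto
    ultimately show ?thesis by (simp add: sum.union_disjoint)
  qed
  show "measure_pmf.expectation (traj (censored m) pol tau theta T)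
            (llr (censored m) pol tau theta theta' T)
         = measure_pmf.expectation (traj (censored m) pol tau theta T)
            (\<lambda>h. (\<Sum>s = 1..T - m. bkl (theta (arm h s) * delay_cdf tau m)
                                        (theta' (arm h s) * delay_cdf tau m))
               + (\<Sum>s = T - m + 1..T. bkl (theta (arm h s) * delay_cdf tau (T - s))
                                          (theta' (arm h s) * delay_cdf tau (T - s))))"
    unfolding main_gen[OF VL_cens assms(1,2)]
  proof (rule Bochner_Integration.integral_cong[OF refl])
    fix h
    let ?g = "\<lambda>s. bkl (theta (arm h s) * delay_cdf tau (min m (T - s))) (theta' (arm h s) * delay_cdf tau (min m (T - s)))"
    have a: "(\<Sum>s = 1..T - m. ?g s) = (\<Sum>s = 1..T - m. bkl (theta (arm h s) * delay_cdf tau m) (theta' (arm h s) * delay_cdf tau m))"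
      by (rule sum.cong) auto
    have b: "(\<Sum>s = T - m + 1..T. ?g s) = (\<Sum>s = T - m + 1..T. bkl (theta (arm h s) * delay_cdf tau (T - s)) (theta' (arm h s) * delay_cdf tau (T - s)))"
      by (rule sum.cong) auto
    show "(\<Sum>s = 1..T. ?g s) = (\<Sum>s = 1..T - m. bkl (theta (arm h s) * delay_cdf tau m)
                                        (theta' (arm h s) * delay_cdf tau m))
               + (\<Sum>s = T - m + 1..T. bkl (theta (arm h s) * delay_cdf tau (T - s))
                                          (theta' (arm h s) * delay_cdf tau (T - s)))"
      using split[of ?g] a b by simp
  qed
qed

end
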